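(* Fix $n\in\mathbb N$ and let $a$ be a configuration reachable in PSSPM from $(\underline{n})$. Then for every word $\omega\in\{\mathcal L,\mathcal R\}^*$, $$\omega(\mathcal R(a))\ \overset{*}{\triangleleft}\ \omega(\mathcal L(a)).$$
   Context: A configuration is a sequence $(c_i)_{i\in\mathbb Z}$ of nonnegative integers with only finitely many positive values; $(\underline{n})$ denotes the configuration with $c_0=n$ and $c_i=0$ otherwise. Rule $\mathcal L$ at column $i$ is applicable if $c_{i-1}+2\le c_i$ and moves one grain from column $i$ to column $i-1$; rule $\mathcal R$ at column $i$ is applicable if $c_i\ge c_{i+1}+2$ and moves one grain from column $i$ to column $i+1$. A PSSPM transition applies rules simultaneously on every column where some rule is applicable, at most one rule per column; in a configuration reachable from $(\underline{n})$ there is at most one column on which both rules are applicable (a "choice"). For a configuration $a$ reachable in PSSPM from $(\underline{n})$: $\mathcal L(a)$ is the configuration obtained by the PSSPM transition from $a$ in which rule $\mathcal L$ is chosen on the choice column if there is one (if there is no choice, the unique transition); if no rule is applicable in $a$, $\mathcal L(a)=a$. $\mathcal R(a)$ is defined symmetrically, choosing $\mathcal R$. For a word $\omega=\omega_1\cdots\omega_k$ over $\{\mathcal L,\mathcal R\}$, $\omega(a)=\omega_2\cdots\omega_k(\omega_1(a))$ (the empty word acts as identity). For configurations $a,b$, let $\Delta(a,b)$ be the sequence $\Delta_i(a,b)=a_i-b_i$. Write $a\overset{*}{\triangleleft} b$ iff every entry of $\Delta(a,b)$ lies in $\{-1,0,1\}$ and the nonzero entries, read in increasing index order, form a word in $((-1)\,1)^*$,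 i.e. alternate $-1,1,-1,1,\dots$, starting with $-1$ and ending with $1$ (in particular $a=b$ implies $a\overset{*}{\triangleleft} b$); equivalently $\Delta(a,b)\in(0^*(-1)0^*10^* )^*$ with zeros elsewhere. *)

theory Defs
  imports Main
begin

type_synonym config = "int \<Rightarrow> nat"

datatype rule = Lr | Rr

definition single :: "nat \<Rightarrow> config" where
  "single n = (\<lambda>i. if i = 0 then n else 0)"

definition L_app :: "config \<Rightarrow> int \<Rightarrow> bool" where
  "L_app c i \<longleftrightarrow> c (i - 1) + 2 \<le> c i"

definition R_app :: "config \<Rightarrow> int \<Rightarrow> bool" where
  "R_app c i \<longleftrightarrow> c i \<ge> c (i + 1) + 2"

definition admissible :: "config \<Rightarrow> (int \<Rightarrow> rule option) \<Rightarrow> bool" where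
  "admissible c d \<longleftrightarrow> (\<forall>i.
     (d i = Some Lr \<longrightarrow> L_app c i) \<and>
     (d i = Some Rr \<longrightarrow> R_app c i) \<and>
     (d i = None \<longrightarrow> \<not> L_app c i \<and> \<not> R_app c i))"

definition apply_rules :: "config \<Rightarrow> (int \<Rightarrow> rule option) \<Rightarrow> config" where
  "apply_rules c d = (\<lambda>i. c i - (if d i = None then 0 else 1)
      + (if d (i + 1) = Some Lr then 1 else 0)
      + (if d (i - 1) = Some Rr then 1 else 0))"

definition psspm_step :: "config \<Rightarrow> config \<Rightarrow> bool" where
  "psspm_step c c' \<longleftrightarrow> (\<exists>d. admissible c d \<and> c' = apply_rules c d)"

inductive reachable :: "nat \<Rightarrow> config \<Rightarrow> bool" for n where
  init: "reachable n (single n)"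
| step: "reachable n c \<Longrightarrow> psspm_step c c' \<Longrightarrow> reachable n c'"

text \<open>The transition choosing L (resp. R) on a choice column; identity if nothing applies.\<close>
definition choiceL :: "config \<Rightarrow> int \<Rightarrow> rule option" where
  "choiceL c i = (if L_app c i then Some Lr else if R_app c i then Some Rr else None)"

definition choiceR :: "config \<Rightarrow> int \<Rightarrow> rule option" where
  "choiceR c i = (if R_app c i then Some Rr else if L_app c i then Some Lr else None)"

definition opL :: "config \<Rightarrow> config" where
  "opL c = apply_rules c (choiceL c)"

definition opR :: "config \<Rightarrow> config" where
  "opR c = apply_rules c (choiceR c)"

fun op_of :: "rule \<Rightarrow> config \<Rightarrow> config" where
  "op_of Lr = opL"
| "op_of Rr = opR"

text \<open>\<omega>(a) = \<omega>_2 ... \<omega>_k(\<omega>_1(a)): letters applied left to right.\<close>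
fun word_apply :: "rule list \<Rightarrow> config \<Rightarrow> config" where
  "word_apply [] a = a"
| "word_apply (x # w) a = word_apply w (op_of x a)"

definition Delta :: "config \<Rightarrow> config \<Rightarrow> int \<Rightarrow> int" where
  "Delta a b i = int (a i) - int (b i)"

definition tri_star :: "config \<Rightarrow> config \<Rightarrow> bool" where
  "tri_star a b \<longleftrightarrow> finite {i. Delta a b i \<noteq> 0} \<and>
     (\<exists>k. map (Delta a b) (sorted_list_of_set {i. Delta a b i \<noteq> 0})
            = concat (replicate k [-1, 1]))"

end

theory Submission
  imports Defs
begin



definition okp :: "int \<Rightarrow> int \<Rightarrow> bool" where
  "okp l r \<longleftrightarrow> l \<le> -1 \<or> r \<le> -1 \<or> l + r \<le> 3 \<or> (l = 2 \<and> r = 2)"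

definition Lap :: "(int \<Rightarrow> int) \<Rightarrow> int \<Rightarrow> bool" where
  "Lap f i \<longleftrightarrow> f (i - 1) + 2 \<le> f i"
definition Rap :: "(int \<Rightarrow> int) \<Rightarrow> int \<Rightarrow> bool" where
  "Rap f i \<longleftrightarrow> f (i + 1) + 2 \<le> f i"

fun mvL :: "bool \<Rightarrow> (int \<Rightarrow> int) \<Rightarrow> int \<Rightarrow> bool" where
  "mvL True f i = Lap f i"
| "mvL False f i = (Lap f i \<and> \<not> Rap f i)"
fun mvR :: "bool \<Rightarrow> (int \<Rightarrow> int) \<Rightarrow> int \<Rightarrow> bool" where
  "mvR True f i = (Rap f i \<and> \<not> Lap f i)"
| "mvR False f i = Rap f i"

definition b2i :: "bool \<Rightarrow> int" where "b2i b = (if b then 1 else 0)"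

definition phi :: "bool \<Rightarrow> (int \<Rightarrow> int) \<Rightarrow> int \<Rightarrow> int" where
  "phi p f j = b2i (mvL p f (j + 1)) - b2i (mvR p f j)"

definition Pxy :: "(int \<Rightarrow> int) \<Rightarrow> (int \<Rightarrow> int) \<Rightarrow> int \<Rightarrow> bool" where
  "Pxy x y j \<longleftrightarrow> (x j - y j = 1 \<longrightarrow> okp (x j - x (j - 1)) (x j - x (j + 1))) \<and>
                  (x j - y j = -1 \<longrightarrow> okp (y j - y (j - 1)) (y j - y (j + 1)))"

lemma localA:
  fixes x y D :: "int \<Rightarrow> int"
  assumes D01: "\<And>i. D i = 0 \<or> D i = 1"
    and xy: "\<And>i. x i - y i = D (i - 1) - D i"
    and P0: "Pxy x y j" and P1: "Pxy x y (j + 1)"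
  shows "D j + phi p y j - phi p x j = 0 \<or> D j + phi p y j - phi p x j = 1"
proof -
  have a: "x (j - 1) - y (j - 1) = D (j - 2) - D (j - 1)" using xy[of "j - 1"] by (simp add: algebra_simps)
  have b: "x j - y j = D (j - 1) - D j" using xy[of j] by simp
  have c: "x (j + 1) - y (j + 1) = D j - D (j + 1)" using xy[of "j+1"] by simp
  have d: "x (j + 2) - y (j + 2) = D (j + 1) - D (j + 2)" using xy[of "j+2"] by (simp add: algebra_simps)
  have e: "j + 1 - 1 = j" "j + 1 + 1 = j + 2" by simp_all
  show ?thesis
    using D01[of "j - 2"] D01[of "j - 1"] D01[of j] D01[of "j+1"] D01[of "j+2"] a b c d P0 P1
    unfolding phi_def Pxy_def okp_def b2i_def e
    by (cases p; simp add: Lap_def Rap_def e; smt)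
qed


definition nxt :: "bool \<Rightarrow> (int \<Rightarrow> int) \<Rightarrow> int \<Rightarrow> int" where
  "nxt p f i = f i - b2i (mvL p f i) - b2i (mvR p f i) + b2i (mvL p f (i + 1)) + b2i (mvR p f (i - 1))"

lemma localC:
  fixes a :: "int \<Rightarrow> int"
  shows "Pxy (nxt False a) (nxt True a) j"
proof -
  have e: "j + 1 - 1 = j" "j - 1 + 1 = j" "j + 1 + 1 = j + 2" "j - 1 - 1 = j - 2"
     "j + 2 + 1 = j + 3" "j - 2 - 1 = j - 3" "j+2-1 = j+1" "j-2+1 = j - 1" by simp_all
  show ?thesis
    unfolding Pxy_def nxt_def okp_def b2i_def mvL.simps mvR.simps Lap_def Rap_def e
    by smt
qed


lemma rawBL:
  fixes xa xb xc xd xe xf da db dc dd de df dg :: int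
  assumes "(da = 0 \<or> da = 1) \<and> (db = 0 \<or> db = 1) \<and> (dc = 0 \<or> dc = 1) \<and> (dd = 0 \<or> dd = 1) \<and> (de = 0 \<or> de = 1) \<and> (df = 0 \<or> df = 1) \<and> (dg = 0 \<or> dg = 1)"
  and "((xd - (xd - dd + de) = 1 \<longrightarrow> ((xd - xc) \<le> -1 \<or> (xd - xe) \<le> -1 \<or> (xd - xc) + (xd - xe) \<le> 3 \<or> ((xd - xc) = 2 \<and> (xd - xe) = 2))) \<and> (xd - (xd - dd + de) = -1 \<longrightarrow> (((xd - dd + de) - (xc - dc + dd)) \<le> -1 \<or> ((xd - dd + de) - (xe - de + df)) \<le> -1 \<or> ((xd - dd + de) - (xc - dc + dd)) + ((xd - dd + de) - (xe - de + df)) \<le> 3 \<or> (((xd - dd + de) - (xc - dc + dd)) = 2 \<and> ((xd - dd + de) - (xe - de + df)) = 2))))"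
  shows "(((xd - (if (xc + 2 \<le> xd) then 1 else 0) - (if ((xe + 2 \<le> xd) \<and> \<not> (xc + 2 \<le> xd)) then 1 else 0) + (if (xd + 2 \<le> xe) then 1 else 0) + (if ((xd + 2 \<le> xc) \<and> \<not> (xb + 2 \<le> xc)) then 1 else 0)) - ((xd - dd + de) - (if ((xc - dc + dd) + 2 \<le> (xd - dd + de)) then 1 else 0) - (if (((xe - de + df) + 2 \<le> (xd - dd + de)) \<and> \<not> ((xc - dc + dd) + 2 \<le> (xd - dd + de))) then 1 else 0) + (if ((xd - dd + de) + 2 \<le> (xe - de + df)) then 1 else 0) + (if (((xd - dd + de) + 2 \<le> (xc - dc + dd)) \<and> \<not> ((xb - db + dc) + 2 \<le> (xc - dc + dd))) then 1 else 0)) = 1 \<longrightarrow> (((xd - (if (xc + 2 \<le> xd) then 1 else 0) - (if ((xe + 2 \<le> xd) \<and> \<not> (xc + 2 \<le> xd)) then 1 else 0) + (if (xd + 2 \<le> xe) then 1 else 0) + (if ((xd + 2 \<le> xc) \<and> \<not> (xb + 2 \<le> xc)) then 1 else 0)) - (xc - (if (xb + 2 \<le> xc) then 1 else 0) - (if ((xd + 2 \<le> xc) \<and> \<not> (xb + 2 \<le> xc)) then 1 else 0) + (if (xc + 2 \<le> xd) then 1 else 0) + (if ((xc + 2 \<le> xb) \<and> \<not> (xa + 2 \<le> xb)) then 1 else 0))) \<le> -1 \<or> ((xd - (if (xc + 2 \<le> xd) then 1 else 0) - (if ((xe + 2 \<le> xd) \<and> \<not> (xc + 2 \<le> xd)) then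 1 else 0) + (if (xd + 2 \<le> xe) then 1 else 0) + (if ((xd + 2 \<le> xc) \<and> \<not> (xb + 2 \<le> xc)) then 1 else 0)) - (xe - (if (xd + 2 \<le> xe) then 1 else 0) - (if ((xf + 2 \<le> xe) \<and> \<not> (xd + 2 \<le> xe)) then 1 else 0) + (if (xe + 2 \<le> xf) then 1 else 0) + (if ((xe + 2 \<le> xd) \<and> \<not> (xc + 2 \<le> xd)) then 1 else 0))) \<le> -1 \<or> ((xd - (if (xc + 2 \<le> xd) then 1 else 0) - (if ((xe + 2 \<le> xd) \<and> \<not> (xc + 2 \<le> xd)) then 1 else 0) + (if (xd + 2 \<le> xe) then 1 else 0) + (if ((xd + 2 \<le> xc) \<and> \<not> (xb + 2 \<le> xc)) then 1 else 0)) - (xc - (if (xb + 2 \<le> xc) then 1 else 0) - (if ((xd + 2 \<le> xc) \<and> \<not> (xb + 2 \<le> xc)) then 1 else 0) + (if (xc + 2 \<le> xd) then 1 else 0) + (if ((xc + 2 \<le> xb) \<and> \<not> (xa + 2 \<le> xb)) then 1 else 0))) + ((xd - (if (xc + 2 \<le> xd) then 1 else 0) - (if ((xe + 2 \<le> xd) \<and> \<not> (xc + 2 \<le> xd)) then 1 else 0) + (if (xd + 2 \<le> xe) then 1 else 0) + (if ((xd + 2 \<le> xc) \<and> \<not> (xb + 2 \<le> xc)) then 1 else 0)) - (xe - (if (xd + 2 \<le> xe) then 1 else 0) - (if ((xf + 2 \<le> xe) \<and> \<not> (xd + 2 \<le> xe)) then 1 else 0) + (if (xe + 2 \<le> xf)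 then 1 else 0) + (if ((xe + 2 \<le> xd) \<and> \<not> (xc + 2 \<le> xd)) then 1 else 0))) \<le> 3 \<or> (((xd - (if (xc + 2 \<le> xd) then 1 else 0) - (if ((xe + 2 \<le> xd) \<and> \<not> (xc + 2 \<le> xd)) then 1 else 0) + (if (xd + 2 \<le> xe) then 1 else 0) + (if ((xd + 2 \<le> xc) \<and> \<not> (xb + 2 \<le> xc)) then 1 else 0)) - (xc - (if (xb + 2 \<le> xc) then 1 else 0) - (if ((xd + 2 \<le> xc) \<and> \<not> (xb + 2 \<le> xc)) then 1 else 0) + (if (xc + 2 \<le> xd) then 1 else 0) + (if ((xc + 2 \<le> xb) \<and> \<not> (xa + 2 \<le> xb)) then 1 else 0))) = 2 \<and> ((xd - (if (xc + 2 \<le> xd) then 1 else 0) - (if ((xe + 2 \<le> xd) \<and> \<not> (xc + 2 \<le> xd)) then 1 else 0) + (if (xd + 2 \<le> xe) then 1 else 0) + (if ((xd + 2 \<le> xc) \<and> \<not> (xb + 2 \<le> xc)) then 1 else 0)) - (xe - (if (xd + 2 \<le> xe) then 1 else 0) - (if ((xf + 2 \<le> xe) \<and> \<not> (xd + 2 \<le> xe)) then 1 else 0) + (if (xe + 2 \<le> xf) then 1 else 0) + (if ((xe + 2 \<le> xd) \<and> \<not> (xc + 2 \<le> xd)) then 1 else 0))) = 2))) \<and> ((xd - (if (xc + 2 \<le> xd) then 1 else 0) - (if ((xe + 2 \<le> xd) \<and> \<not> (xc + 2 \<le> xd)) then 1 else 0) + (if (xd + 2 \<le> xe) then 1 else 0)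 + (if ((xd + 2 \<le> xc) \<and> \<not> (xb + 2 \<le> xc)) then 1 else 0)) - ((xd - dd + de) - (if ((xc - dc + dd) + 2 \<le> (xd - dd + de)) then 1 else 0) - (if (((xe - de + df) + 2 \<le> (xd - dd + de)) \<and> \<not> ((xc - dc + dd) + 2 \<le> (xd - dd + de))) then 1 else 0) + (if ((xd - dd + de) + 2 \<le> (xe - de + df)) then 1 else 0) + (if (((xd - dd + de) + 2 \<le> (xc - dc + dd)) \<and> \<not> ((xb - db + dc) + 2 \<le> (xc - dc + dd))) then 1 else 0)) = -1 \<longrightarrow> ((((xd - dd + de) - (if ((xc - dc + dd) + 2 \<le> (xd - dd + de)) then 1 else 0) - (if (((xe - de + df) + 2 \<le> (xd - dd + de)) \<and> \<not> ((xc - dc + dd) + 2 \<le> (xd - dd + de))) then 1 else 0) + (if ((xd - dd + de) + 2 \<le> (xe - de + df)) then 1 else 0) + (if (((xd - dd + de) + 2 \<le> (xc - dc + dd)) \<and> \<not> ((xb - db + dc) + 2 \<le> (xc - dc + dd))) then 1 else 0)) - ((xc - dc + dd) - (if ((xb - db + dc) + 2 \<le> (xc - dc + dd)) then 1 else 0) - (if (((xd - dd + de) + 2 \<le> (xc - dc + dd)) \<and> \<not> ((xb - db + dc) + 2 \<le> (xc - dc + dd))) then 1 else 0) + (if ((xc - dc + dd) + 2 \<le> (xd - dd + de)) then 1 else 0) + (if (((xc - dc + dd) + 2 \<le> (xb - db + dc)) \<and> \<not> ((xa - da + db) + 2 \<le> (xb - db + dc))) then 1 else 0))) \<le> -1 \<or>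 (((xd - dd + de) - (if ((xc - dc + dd) + 2 \<le> (xd - dd + de)) then 1 else 0) - (if (((xe - de + df) + 2 \<le> (xd - dd + de)) \<and> \<not> ((xc - dc + dd) + 2 \<le> (xd - dd + de))) then 1 else 0) + (if ((xd - dd + de) + 2 \<le> (xe - de + df)) then 1 else 0) + (if (((xd - dd + de) + 2 \<le> (xc - dc + dd)) \<and> \<not> ((xb - db + dc) + 2 \<le> (xc - dc + dd))) then 1 else 0)) - ((xe - de + df) - (if ((xd - dd + de) + 2 \<le> (xe - de + df)) then 1 else 0) - (if (((xf - df + dg) + 2 \<le> (xe - de + df)) \<and> \<not> ((xd - dd + de) + 2 \<le> (xe - de + df))) then 1 else 0) + (if ((xe - de + df) + 2 \<le> (xf - df + dg)) then 1 else 0) + (if (((xe - de + df) + 2 \<le> (xd - dd + de)) \<and> \<not> ((xc - dc + dd) + 2 \<le> (xd - dd + de))) then 1 else 0))) \<le> -1 \<or> (((xd - dd + de) - (if ((xc - dc + dd) + 2 \<le> (xd - dd + de)) then 1 else 0) - (if (((xe - de + df) + 2 \<le> (xd - dd + de)) \<and> \<not> ((xc - dc + dd) + 2 \<le> (xd - dd + de))) then 1 else 0) + (if ((xd - dd + de) + 2 \<le> (xe - de + df)) then 1 else 0) + (if (((xd - dd + de) + 2 \<le> (xc - dc + dd)) \<and> \<not> ((xb - db + dc) + 2 \<le> (xc - dc + dd))) then 1 else 0)) - ((xc - dc + dd) - (if ((xb - db + dc) + 2 \<le> (xc - dc + dd)) then 1 else 0) - (if (((xd - dd + de) + 2 \<le>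 (xc - dc + dd)) \<and> \<not> ((xb - db + dc) + 2 \<le> (xc - dc + dd))) then 1 else 0) + (if ((xc - dc + dd) + 2 \<le> (xd - dd + de)) then 1 else 0) + (if (((xc - dc + dd) + 2 \<le> (xb - db + dc)) \<and> \<not> ((xa - da + db) + 2 \<le> (xb - db + dc))) then 1 else 0))) + (((xd - dd + de) - (if ((xc - dc + dd) + 2 \<le> (xd - dd + de)) then 1 else 0) - (if (((xe - de + df) + 2 \<le> (xd - dd + de)) \<and> \<not> ((xc - dc + dd) + 2 \<le> (xd - dd + de))) then 1 else 0) + (if ((xd - dd + de) + 2 \<le> (xe - de + df)) then 1 else 0) + (if (((xd - dd + de) + 2 \<le> (xc - dc + dd)) \<and> \<not> ((xb - db + dc) + 2 \<le> (xc - dc + dd))) then 1 else 0)) - ((xe - de + df) - (if ((xd - dd + de) + 2 \<le> (xe - de + df)) then 1 else 0) - (if (((xf - df + dg) + 2 \<le> (xe - de + df)) \<and> \<not> ((xd - dd + de) + 2 \<le> (xe - de + df))) then 1 else 0) + (if ((xe - de + df) + 2 \<le> (xf - df + dg)) then 1 else 0) + (if (((xe - de + df) + 2 \<le> (xd - dd + de)) \<and> \<not> ((xc - dc + dd) + 2 \<le> (xd - dd + de))) then 1 else 0))) \<le> 3 \<or> ((((xd - dd + de) - (if ((xc - dc + dd) + 2 \<le> (xd - dd + de)) then 1 else 0) - (if (((xe - de + df) + 2 \<le> (xd - dd + de)) \<and> \<not> ((xc - dc + dd) + 2 \<le> (xd - dd + de))) then 1 else 0) + (if ((xd - dd + de)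 + 2 \<le> (xe - de + df)) then 1 else 0) + (if (((xd - dd + de) + 2 \<le> (xc - dc + dd)) \<and> \<not> ((xb - db + dc) + 2 \<le> (xc - dc + dd))) then 1 else 0)) - ((xc - dc + dd) - (if ((xb - db + dc) + 2 \<le> (xc - dc + dd)) then 1 else 0) - (if (((xd - dd + de) + 2 \<le> (xc - dc + dd)) \<and> \<not> ((xb - db + dc) + 2 \<le> (xc - dc + dd))) then 1 else 0) + (if ((xc - dc + dd) + 2 \<le> (xd - dd + de)) then 1 else 0) + (if (((xc - dc + dd) + 2 \<le> (xb - db + dc)) \<and> \<not> ((xa - da + db) + 2 \<le> (xb - db + dc))) then 1 else 0))) = 2 \<and> (((xd - dd + de) - (if ((xc - dc + dd) + 2 \<le> (xd - dd + de)) then 1 else 0) - (if (((xe - de + df) + 2 \<le> (xd - dd + de)) \<and> \<not> ((xc - dc + dd) + 2 \<le> (xd - dd + de))) then 1 else 0) + (if ((xd - dd + de) + 2 \<le> (xe - de + df)) then 1 else 0) + (if (((xd - dd + de) + 2 \<le> (xc - dc + dd)) \<and> \<not> ((xb - db + dc) + 2 \<le> (xc - dc + dd))) then 1 else 0)) - ((xe - de + df) - (if ((xd - dd + de) + 2 \<le> (xe - de + df)) then 1 else 0) - (if (((xf - df + dg) + 2 \<le> (xe - de + df)) \<and> \<not> ((xd - dd + de) + 2 \<le> (xe - de + df))) then 1 else 0) + (if ((xe - de + df) + 2 \<le> (xf - df + dg)) then 1 else 0) + (if (((xe - de + df) + 2 \<le> (xd - dd + de)) \<and> \<not> ((xc -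 dc + dd) + 2 \<le> (xd - dd + de))) then 1 else 0))) = 2))))"
  using assms by (smt (verit))

lemma rawBR:
  fixes xb xc xd xe xf xg db dc dd de df dg dh :: int
  assumes "(db = 0 \<or> db = 1) \<and> (dc = 0 \<or> dc = 1) \<and> (dd = 0 \<or> dd = 1) \<and> (de = 0 \<or> de = 1) \<and> (df = 0 \<or> df = 1) \<and> (dg = 0 \<or> dg = 1) \<and> (dh = 0 \<or> dh = 1)"
  and "((xd - (xd - dd + de) = 1 \<longrightarrow> ((xd - xc) \<le> -1 \<or> (xd - xe) \<le> -1 \<or> (xd - xc) + (xd - xe) \<le> 3 \<or> ((xd - xc) = 2 \<and> (xd - xe) = 2))) \<and> (xd - (xd - dd + de) = -1 \<longrightarrow> (((xd - dd + de) - (xc - dc + dd)) \<le> -1 \<or> ((xd - dd + de) - (xe - de + df)) \<le> -1 \<or> ((xd - dd + de) - (xc - dc + dd)) + ((xd - dd + de) - (xe - de + df)) \<le> 3 \<or> (((xd - dd + de) - (xc - dc + dd)) = 2 \<and> ((xd - dd + de) - (xe - de + df)) = 2))))"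
  shows "(((xd - (if ((xc + 2 \<le> xd) \<and> \<not> (xe + 2 \<le> xd)) then 1 else 0) - (if (xe + 2 \<le> xd) then 1 else 0) + (if ((xd + 2 \<le> xe) \<and> \<not> (xf + 2 \<le> xe)) then 1 else 0) + (if (xd + 2 \<le> xc) then 1 else 0)) - ((xd - dd + de) - (if (((xc - dc + dd) + 2 \<le> (xd - dd + de)) \<and> \<not> ((xe - de + df) + 2 \<le> (xd - dd + de))) then 1 else 0) - (if ((xe - de + df) + 2 \<le> (xd - dd + de)) then 1 else 0) + (if (((xd - dd + de) + 2 \<le> (xe - de + df)) \<and> \<not> ((xf - df + dg) + 2 \<le> (xe - de + df))) then 1 else 0) + (if ((xd - dd + de) + 2 \<le> (xc - dc + dd)) then 1 else 0)) = 1 \<longrightarrow> (((xd - (if ((xc + 2 \<le> xd) \<and> \<not> (xe + 2 \<le> xd)) then 1 else 0) - (if (xe + 2 \<le> xd) then 1 else 0) + (if ((xd + 2 \<le> xe) \<and> \<not> (xf + 2 \<le> xe)) then 1 else 0) + (if (xd + 2 \<le> xc) then 1 else 0)) - (xc - (if ((xb + 2 \<le> xc) \<and> \<not> (xd + 2 \<le> xc)) then 1 else 0) - (if (xd + 2 \<le> xc) then 1 else 0) + (if ((xc + 2 \<le> xd) \<and> \<not> (xe + 2 \<le> xd)) then 1 else 0) + (if (xc + 2 \<le> xb) then 1 else 0))) \<le> -1 \<or> ((xd - (if ((xc + 2 \<le> xd) \<and> \<not> (xe + 2 \<le> xd)) then 1 else 0) - (if (xe + 2 \<le> xd) then 1 else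 0) + (if ((xd + 2 \<le> xe) \<and> \<not> (xf + 2 \<le> xe)) then 1 else 0) + (if (xd + 2 \<le> xc) then 1 else 0)) - (xe - (if ((xd + 2 \<le> xe) \<and> \<not> (xf + 2 \<le> xe)) then 1 else 0) - (if (xf + 2 \<le> xe) then 1 else 0) + (if ((xe + 2 \<le> xf) \<and> \<not> (xg + 2 \<le> xf)) then 1 else 0) + (if (xe + 2 \<le> xd) then 1 else 0))) \<le> -1 \<or> ((xd - (if ((xc + 2 \<le> xd) \<and> \<not> (xe + 2 \<le> xd)) then 1 else 0) - (if (xe + 2 \<le> xd) then 1 else 0) + (if ((xd + 2 \<le> xe) \<and> \<not> (xf + 2 \<le> xe)) then 1 else 0) + (if (xd + 2 \<le> xc) then 1 else 0)) - (xc - (if ((xb + 2 \<le> xc) \<and> \<not> (xd + 2 \<le> xc)) then 1 else 0) - (if (xd + 2 \<le> xc) then 1 else 0) + (if ((xc + 2 \<le> xd) \<and> \<not> (xe + 2 \<le> xd)) then 1 else 0) + (if (xc + 2 \<le> xb) then 1 else 0))) + ((xd - (if ((xc + 2 \<le> xd) \<and> \<not> (xe + 2 \<le> xd)) then 1 else 0) - (if (xe + 2 \<le> xd) then 1 else 0) + (if ((xd + 2 \<le> xe) \<and> \<not> (xf + 2 \<le> xe)) then 1 else 0) + (if (xd + 2 \<le> xc) then 1 else 0)) - (xe - (if ((xd + 2 \<le> xe) \<and> \<not> (xf + 2 \<le> xe)) then 1 else 0) - (if (xf + 2 \<le> xe) then 1 else 0) + (if ((xe + 2 \<le> xf) \<and>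 \<not> (xg + 2 \<le> xf)) then 1 else 0) + (if (xe + 2 \<le> xd) then 1 else 0))) \<le> 3 \<or> (((xd - (if ((xc + 2 \<le> xd) \<and> \<not> (xe + 2 \<le> xd)) then 1 else 0) - (if (xe + 2 \<le> xd) then 1 else 0) + (if ((xd + 2 \<le> xe) \<and> \<not> (xf + 2 \<le> xe)) then 1 else 0) + (if (xd + 2 \<le> xc) then 1 else 0)) - (xc - (if ((xb + 2 \<le> xc) \<and> \<not> (xd + 2 \<le> xc)) then 1 else 0) - (if (xd + 2 \<le> xc) then 1 else 0) + (if ((xc + 2 \<le> xd) \<and> \<not> (xe + 2 \<le> xd)) then 1 else 0) + (if (xc + 2 \<le> xb) then 1 else 0))) = 2 \<and> ((xd - (if ((xc + 2 \<le> xd) \<and> \<not> (xe + 2 \<le> xd)) then 1 else 0) - (if (xe + 2 \<le> xd) then 1 else 0) + (if ((xd + 2 \<le> xe) \<and> \<not> (xf + 2 \<le> xe)) then 1 else 0) + (if (xd + 2 \<le> xc) then 1 else 0)) - (xe - (if ((xd + 2 \<le> xe) \<and> \<not> (xf + 2 \<le> xe)) then 1 else 0) - (if (xf + 2 \<le> xe) then 1 else 0) + (if ((xe + 2 \<le> xf) \<and> \<not> (xg + 2 \<le> xf)) then 1 else 0) + (if (xe + 2 \<le> xd) then 1 else 0))) = 2))) \<and> ((xd - (if ((xc + 2 \<le> xd) \<and> \<not> (xe + 2 \<le> xd)) then 1 else 0) - (if (xe + 2 \<le> xd) then 1 else 0) + (if ((xd + 2 \<le> xe) \<and> \<not> (xf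 + 2 \<le> xe)) then 1 else 0) + (if (xd + 2 \<le> xc) then 1 else 0)) - ((xd - dd + de) - (if (((xc - dc + dd) + 2 \<le> (xd - dd + de)) \<and> \<not> ((xe - de + df) + 2 \<le> (xd - dd + de))) then 1 else 0) - (if ((xe - de + df) + 2 \<le> (xd - dd + de)) then 1 else 0) + (if (((xd - dd + de) + 2 \<le> (xe - de + df)) \<and> \<not> ((xf - df + dg) + 2 \<le> (xe - de + df))) then 1 else 0) + (if ((xd - dd + de) + 2 \<le> (xc - dc + dd)) then 1 else 0)) = -1 \<longrightarrow> ((((xd - dd + de) - (if (((xc - dc + dd) + 2 \<le> (xd - dd + de)) \<and> \<not> ((xe - de + df) + 2 \<le> (xd - dd + de))) then 1 else 0) - (if ((xe - de + df) + 2 \<le> (xd - dd + de)) then 1 else 0) + (if (((xd - dd + de) + 2 \<le> (xe - de + df)) \<and> \<not> ((xf - df + dg) + 2 \<le> (xe - de + df))) then 1 else 0) + (if ((xd - dd + de) + 2 \<le> (xc - dc + dd)) then 1 else 0)) - ((xc - dc + dd) - (if (((xb - db + dc) + 2 \<le> (xc - dc + dd)) \<and> \<not> ((xd - dd + de) + 2 \<le> (xc - dc + dd))) then 1 else 0) - (if ((xd - dd + de) + 2 \<le> (xc - dc + dd)) then 1 else 0) + (if (((xc - dc + dd) + 2 \<le> (xd - dd + de)) \<and> \<not> ((xe - de + df) + 2 \<le> (xd - dd + de))) then 1 else 0) + (if ((xc - dc + dd) + 2 \<le> (xb - db + dc)) then 1 else 0))) \<le> -1 \<or> (((xd - dd +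 de) - (if (((xc - dc + dd) + 2 \<le> (xd - dd + de)) \<and> \<not> ((xe - de + df) + 2 \<le> (xd - dd + de))) then 1 else 0) - (if ((xe - de + df) + 2 \<le> (xd - dd + de)) then 1 else 0) + (if (((xd - dd + de) + 2 \<le> (xe - de + df)) \<and> \<not> ((xf - df + dg) + 2 \<le> (xe - de + df))) then 1 else 0) + (if ((xd - dd + de) + 2 \<le> (xc - dc + dd)) then 1 else 0)) - ((xe - de + df) - (if (((xd - dd + de) + 2 \<le> (xe - de + df)) \<and> \<not> ((xf - df + dg) + 2 \<le> (xe - de + df))) then 1 else 0) - (if ((xf - df + dg) + 2 \<le> (xe - de + df)) then 1 else 0) + (if (((xe - de + df) + 2 \<le> (xf - df + dg)) \<and> \<not> ((xg - dg + dh) + 2 \<le> (xf - df + dg))) then 1 else 0) + (if ((xe - de + df) + 2 \<le> (xd - dd + de)) then 1 else 0))) \<le> -1 \<or> (((xd - dd + de) - (if (((xc - dc + dd) + 2 \<le> (xd - dd + de)) \<and> \<not> ((xe - de + df) + 2 \<le> (xd - dd + de))) then 1 else 0) - (if ((xe - de + df) + 2 \<le> (xd - dd + de)) then 1 else 0) + (if (((xd - dd + de) + 2 \<le> (xe - de + df)) \<and> \<not> ((xf - df + dg) + 2 \<le> (xe - de + df))) then 1 else 0) + (if ((xd - dd + de) + 2 \<le> (xc - dc + dd)) then 1 else 0)) - ((xc - dc + dd) - (if (((xb - db + dc) + 2 \<le> (xc - dc + dd)) \<and> \<not> ((xd - dd + de) + 2 \<le> (xc - dc + dd))) then 1 else 0)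 - (if ((xd - dd + de) + 2 \<le> (xc - dc + dd)) then 1 else 0) + (if (((xc - dc + dd) + 2 \<le> (xd - dd + de)) \<and> \<not> ((xe - de + df) + 2 \<le> (xd - dd + de))) then 1 else 0) + (if ((xc - dc + dd) + 2 \<le> (xb - db + dc)) then 1 else 0))) + (((xd - dd + de) - (if (((xc - dc + dd) + 2 \<le> (xd - dd + de)) \<and> \<not> ((xe - de + df) + 2 \<le> (xd - dd + de))) then 1 else 0) - (if ((xe - de + df) + 2 \<le> (xd - dd + de)) then 1 else 0) + (if (((xd - dd + de) + 2 \<le> (xe - de + df)) \<and> \<not> ((xf - df + dg) + 2 \<le> (xe - de + df))) then 1 else 0) + (if ((xd - dd + de) + 2 \<le> (xc - dc + dd)) then 1 else 0)) - ((xe - de + df) - (if (((xd - dd + de) + 2 \<le> (xe - de + df)) \<and> \<not> ((xf - df + dg) + 2 \<le> (xe - de + df))) then 1 else 0) - (if ((xf - df + dg) + 2 \<le> (xe - de + df)) then 1 else 0) + (if (((xe - de + df) + 2 \<le> (xf - df + dg)) \<and> \<not> ((xg - dg + dh) + 2 \<le> (xf - df + dg))) then 1 else 0) + (if ((xe - de + df) + 2 \<le> (xd - dd + de)) then 1 else 0))) \<le> 3 \<or> ((((xd - dd + de) - (if (((xc - dc + dd) + 2 \<le> (xd - dd + de)) \<and> \<not> ((xe - de + df) + 2 \<le> (xd - dd + de))) then 1 else 0) - (if ((xe - de + df) + 2 \<le> (xd - dd + de)) then 1 else 0) + (if (((xd - dd + de) + 2 \<le> (xe - de + df)) \<and> \<not>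 ((xf - df + dg) + 2 \<le> (xe - de + df))) then 1 else 0) + (if ((xd - dd + de) + 2 \<le> (xc - dc + dd)) then 1 else 0)) - ((xc - dc + dd) - (if (((xb - db + dc) + 2 \<le> (xc - dc + dd)) \<and> \<not> ((xd - dd + de) + 2 \<le> (xc - dc + dd))) then 1 else 0) - (if ((xd - dd + de) + 2 \<le> (xc - dc + dd)) then 1 else 0) + (if (((xc - dc + dd) + 2 \<le> (xd - dd + de)) \<and> \<not> ((xe - de + df) + 2 \<le> (xd - dd + de))) then 1 else 0) + (if ((xc - dc + dd) + 2 \<le> (xb - db + dc)) then 1 else 0))) = 2 \<and> (((xd - dd + de) - (if (((xc - dc + dd) + 2 \<le> (xd - dd + de)) \<and> \<not> ((xe - de + df) + 2 \<le> (xd - dd + de))) then 1 else 0) - (if ((xe - de + df) + 2 \<le> (xd - dd + de)) then 1 else 0) + (if (((xd - dd + de) + 2 \<le> (xe - de + df)) \<and> \<not> ((xf - df + dg) + 2 \<le> (xe - de + df))) then 1 else 0) + (if ((xd - dd + de) + 2 \<le> (xc - dc + dd)) then 1 else 0)) - ((xe - de + df) - (if (((xd - dd + de) + 2 \<le> (xe - de + df)) \<and> \<not> ((xf - df + dg) + 2 \<le> (xe - de + df))) then 1 else 0) - (if ((xf - df + dg) + 2 \<le> (xe - de + df)) then 1 else 0) + (if (((xe - de + df) + 2 \<le> (xf - df + dg)) \<and> \<not> ((xg - dg + dh) + 2 \<le> (xf - df + dg))) then 1 else 0) + (if ((xe - de + df) + 2 \<le> (xd - dd + de)) then 1 else 0)))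 = 2))))"
  using assms by (smt (verit))

definition cfg :: "config \<Rightarrow> int \<Rightarrow> int" where "cfg c = (\<lambda>i. int (c i))"

lemma L_app_iff: "L_app c i \<longleftrightarrow> Lap (cfg c) i"
  by (auto simp: L_app_def Lap_def cfg_def)
lemma R_app_iff: "R_app c i \<longleftrightarrow> Rap (cfg c) i"
  by (auto simp: R_app_def Rap_def cfg_def)

lemma cfg_apply: "cfg c i = int (c i)" by (simp add: cfg_def)

lemma apply_rules_int:
  assumes "d i \<noteq> None \<longrightarrow> 1 \<le> c i"
  shows "int (apply_rules c d i) = int (c i) - (if d i = None then 0 else 1)
      + (if d (i + 1) = Some Lr then 1 else 0) + (if d (i - 1) = Some Rr then 1 else 0)"
  using assms by (auto simp: apply_rules_def of_nat_diff)

lemma opL_int: "cfg (opL c) i = nxt True (cfg c) i"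
proof -
  have ge: "choiceL c i \<noteq> None \<longrightarrow> 1 \<le> c i"
    by (auto simp: choiceL_def L_app_def R_app_def split: if_splits)
  show ?thesis
    unfolding cfg_apply opL_def apply_rules_int[where c=c and d="choiceL c" and i=i, OF ge]
    unfolding nxt_def b2i_def choiceL_def L_app_def R_app_def cfg_def mvL.simps mvR.simps Lap_def Rap_def
    by auto
qed

lemma opR_int: "cfg (opR c) i = nxt False (cfg c) i"
proof -
  have ge: "choiceR c i \<noteq> None \<longrightarrow> 1 \<le> c i"
    by (auto simp: choiceR_def L_app_def R_app_def split: if_splits)
  show ?thesis
    unfolding cfg_apply opR_def apply_rules_int[where c=c and d="choiceR c" and i=i, OF ge]
    unfolding nxt_def b2i_def choiceR_def L_app_def R_app_def cfg_def mvL.simps mvR.simps Lap_def Rap_def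
    by auto
qed

lemma op_of_int: "cfg (op_of r c) i = nxt (r = Lr) (cfg c) i"
  by (cases r) (simp_all add: opL_int opR_int)

lemma nxt_phi: "nxt p f i = f i + phi p f i - phi p f (i - 1)"
  by (simp add: nxt_def phi_def)

lemma phi_local:
  assumes "f (j - 1) = g (j - 1)" "f j = g j" "f (j + 1) = g (j + 1)" "f (j + 2) = g (j + 2)"
  shows "phi p f j = phi p g j"
proof -
  have e: "j + 1 - 1 = j" "j + 1 + 1 = j + 2" by simp_all
  show ?thesis using assms
    by (cases p) (simp_all add: phi_def Lap_def Rap_def e)
qed

lemma localB:
  fixes x y D :: "int \<Rightarrow> int"
  assumes D01: "\<And>i. D i = 0 \<or> D i = 1"
    and xy: "\<And>i. x i - y i = D (i - 1) - D i"
    and P0: "Pxy x y j"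
  shows "Pxy (nxt p x) (nxt p y) j"
proof -
  have yv: "\<And>i. y i = x i - D (i - 1) + D i" using xy by (metis add.commute diff_add_cancel diff_diff_eq2)
  have e: "j + 1 - 1 = j" "j - 1 + 1 = j" "j + 1 + 1 = j + 2" "j - 1 - 1 = j - 2"
     "j + 2 + 1 = j + 3" "j - 2 - 1 = j - 3" "j+2-1 = j+1" "j-2+1 = j - 1" "j - 3 - 1 = j - 4"
     "j + 3 - 1 = j + 2" "j - 1 + 1 = j" "j - 0 = j" by simp_all
  have ys: "y (j-3) = x (j-3) - D (j-4) + D (j-3)" "y (j-2) = x (j-2) - D (j-3) + D (j-2)"
     "y (j-1) = x (j-1) - D (j-2) + D (j-1)" "y j = x j - D (j-1) + D j"
     "y (j+1) = x (j+1) - D j + D (j+1)" "y (j+2) = x (j+2) - D (j+1) + D (j+2)"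
     "y (j+3) = x (j+3) - D (j+2) + D (j+3)"
    using yv[of "j-3"] yv[of "j-2"] yv[of "j-1"] yv[of j] yv[of "j+1"] yv[of "j+2"] yv[of "j+3"]
    by (simp_all add: e)
  have DL: "(D (j - 4) = 0 \<or> D (j - 4) = 1) \<and> (D (j - 3) = 0 \<or> D (j - 3) = 1) \<and> (D (j - 2) = 0 \<or> D (j - 2) = 1) \<and> (D (j - 1) = 0 \<or> D (j - 1) = 1) \<and> (D (j) = 0 \<or> D (j) = 1) \<and> (D (j + 1) = 0 \<or> D (j + 1) = 1) \<and> (D (j + 2) = 0 \<or> D (j + 2) = 1)" using D01 by blast
  have DR: "(D (j - 3) = 0 \<or> D (j - 3) = 1) \<and> (D (j - 2) = 0 \<or> D (j - 2) = 1) \<and> (D (j - 1) = 0 \<or> D (j - 1) = 1) \<and> (D (j) = 0 \<or> D (j) = 1) \<and> (D (j + 1) = 0 \<or> D (j + 1) = 1) \<and> (D (j + 2) = 0 \<or> D (j + 2) = 1) \<and> (D (j + 3) = 0 \<or> D (j + 3) = 1)" using D01 by blast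
  have P0': "Pxy x (\<lambda>i. x i - D (i - 1) + D i) j" using P0 yv by (metis (no_types, lifting) ext)
  show ?thesis
  proof (cases p)
    case True
    have "Pxy (nxt True x) (nxt True y) j"
      using rawBL[where xa="x (j - 3)" and xb="x (j - 2)" and xc="x (j - 1)" and xd="x (j)" and xe="x (j + 1)" and xf="x (j + 2)" and da="D (j - 4)" and db="D (j - 3)" and dc="D (j - 2)" and dd="D (j - 1)" and de="D (j)" and df="D (j + 1)" and dg="D (j + 2)", OF DL] P0
      unfolding Pxy_def nxt_def mvL.simps mvR.simps Lap_def Rap_def b2i_def okp_def e ys
      by simp
    then show ?thesis using True by simp
  next
    case False
    have "Pxy (nxt False x) (nxt False y) j"
      using rawBR[where xb="x (j - 2)" and xc="x (j - 1)" and xd="x (j)" and xe="x (j + 1)" and xf="x (j + 2)" and xg="x (j + 3)" and db="D (j - 3)" and dc="D (j - 2)" and dd="D (j - 1)" and de="D (j)" and df="D (j + 1)" and dg="D (j + 2)" and dh="D (j + 3)", OF DR] P0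
      unfolding Pxy_def nxt_def mvL.simps mvR.simps Lap_def Rap_def b2i_def okp_def e ys
      by simp
    then show ?thesis using False by simp
  qed
qed



definition Inv :: "config \<Rightarrow> config \<Rightarrow> bool" where
  "Inv x y \<longleftrightarrow> (\<exists>D. (\<forall>i. D i = 0 \<or> D i = 1) \<and> finite {i. D i \<noteq> 0} \<and>
      (\<forall>i. cfg x i - cfg y i = D (i - 1) - D i) \<and> (\<forall>j. Pxy (cfg x) (cfg y) j))"

lemma finite_shift: "finite S \<Longrightarrow> finite {i::int. i + k \<in> S}"
proof -
  assume "finite S"
  then have "finite ((\<lambda>i. i - k) ` S)" by simp
  moreover have "{i::int. i + k \<in> S} = (\<lambda>i. i - k) ` S" by (auto simp: image_iff) (metis add_diff_cancel_right')
  ultimately show ?thesis by simp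
qed

lemma Inv_step:
  assumes "Inv x y"
  shows "Inv (op_of r x) (op_of r y)"
proof -
  obtain D where D01: "\<And>i. D i = 0 \<or> D i = 1" and fin: "finite {i. D i \<noteq> 0}"
    and xy: "\<And>i. cfg x i - cfg y i = D (i - 1) - D i" and P: "\<And>j. Pxy (cfg x) (cfg y) j"
    using assms unfolding Inv_def by blast
  define p where "p = (r = Lr)"
  define D' where "D' = (\<lambda>j. D j + phi p (cfg y) j - phi p (cfg x) j)"
  have ox: "cfg (op_of r x) = nxt p (cfg x)" and oy: "cfg (op_of r y) = nxt p (cfg y)"
    by (auto simp: op_of_int p_def)
  have A: "D' i = 0 \<or> D' i = 1" for i
    unfolding D'_def by (rule localA[OF D01 xy P P])
  have rel: "cfg (op_of r x) i - cfg (op_of r y) i = D' (i - 1) - D' i" for i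
    unfolding ox oy D'_def nxt_phi using xy[of i] by simp
  have B: "Pxy (cfg (op_of r x)) (cfg (op_of r y)) j" for j
    unfolding ox oy by (rule localB[OF D01 xy P])
  have eq: "cfg x i = cfg y i" if "D (i - 1) = 0" "D i = 0" for i
    using xy[of i] that by simp
  have sub: "{j. D' j \<noteq> 0} \<subseteq> {j. D j \<noteq> 0} \<union> {j. j - 1 \<in> {i. D i \<noteq> 0}} \<union> {j. j + 0 \<in> {i. D i \<noteq> 0}}
       \<union> {j. j + 1 \<in> {i. D i \<noteq> 0}} \<union> {j. j + 2 \<in> {i. D i \<noteq> 0}} \<union> {j. j + (-2) \<in> {i. D i \<noteq> 0}}"
  proof
    fix j assume "j \<in> {j. D' j \<noteq> 0}"
    then have nz: "D' j \<noteq> 0" by simp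
    show "j \<in> {j. D j \<noteq> 0} \<union> {j. j - 1 \<in> {i. D i \<noteq> 0}} \<union> {j. j + 0 \<in> {i. D i \<noteq> 0}}
       \<union> {j. j + 1 \<in> {i. D i \<noteq> 0}} \<union> {j. j + 2 \<in> {i. D i \<noteq> 0}} \<union> {j. j + (-2) \<in> {i. D i \<noteq> 0}}"
    proof (rule ccontr)
      assume "\<not> ?thesis"
      then have z: "D j = 0" "D (j - 1) = 0" "D (j + 1) = 0" "D (j + 2) = 0" "D (j - 2) = 0"
        by auto
      have "phi p (cfg y) j = phi p (cfg x) j"
        by (rule phi_local) (use eq z in \<open>auto simp: algebra_simps\<close>)
      then show False using nz z by (simp add: D'_def)
    qed
  qed
  have fin': "finite {j. D' j \<noteq> 0}"
    apply (rule finite_subset[OF sub])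
    using fin finite_shift[OF fin] by (simp add: diff_conv_add_uminus del: add_uminus_conv_diff)
  show ?thesis unfolding Inv_def using A fin' rel B by blast
qed



lemma Inv_word: "Inv x y \<Longrightarrow> Inv (word_apply w x) (word_apply w y)"
proof (induction w arbitrary: x y)
  case Nil then show ?case by simp
next
  case (Cons r w) then show ?case by (simp add: Inv_step)
qed

lemma D0_01: "phi True f j - phi False f j = 0 \<or> phi True f j - phi False f j = 1"
proof -
  have e: "j + 1 - 1 = j" "j + 1 + 1 = j + 2" by simp_all
  show ?thesis unfolding phi_def b2i_def mvL.simps mvR.simps Lap_def Rap_def e by smt
qed

lemma D0_supp:
  assumes "\<And>i. f i \<ge> 0" "phi True f j - phi False f j \<noteq> 0"
  shows "f j \<noteq> 0 \<or> f (j + 1) \<noteq> 0"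
proof -
  have e: "j + 1 - 1 = j" "j + 1 + 1 = j + 2" by simp_all
  show ?thesis using assms(2) assms(1)[of j] assms(1)[of "j+1"]
    unfolding phi_def b2i_def mvL.simps mvR.simps Lap_def Rap_def e
    by (auto split: if_splits)
qed

lemma reach_fin: "reachable n c \<Longrightarrow> finite {i. c i \<noteq> 0}"
proof (induction rule: reachable.induct)
  case init
  have "{i. single n i \<noteq> 0} \<subseteq> {0}" by (auto simp: single_def split: if_splits)
  then show ?case using finite_subset by blast
next
  case (step c c')
  obtain d where ad: "admissible c d" and c': "c' = apply_rules c d"
    using step.hyps(2) unfolding psspm_step_def by blast
  have sub: "{i. c' i \<noteq> 0} \<subseteq> {i. c i \<noteq> 0} \<union> {i. i + 1 \<in> {i. c i \<noteq> 0}} \<union> {i. i + (-1) \<in> {i. c i \<noteq> 0}}"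
  proof
    fix i assume "i \<in> {i. c' i \<noteq> 0}"
    then have nz: "c' i \<noteq> 0" by simp
    have a1: "d (i + 1) = Some Lr \<Longrightarrow> c (i + 1) \<noteq> 0"
      using ad unfolding admissible_def L_app_def by (metis add_eq_0_iff_both_eq_0 le_zero_eq zero_neq_numeral)
    have a2: "d (i - 1) = Some Rr \<Longrightarrow> c (i - 1) \<noteq> 0"
      using ad unfolding admissible_def R_app_def by (metis add_eq_0_iff_both_eq_0 le_zero_eq zero_neq_numeral)
    show "i \<in> {i. c i \<noteq> 0} \<union> {i. i + 1 \<in> {i. c i \<noteq> 0}} \<union> {i. i + (-1) \<in> {i. c i \<noteq> 0}}"
      using nz a1 a2 unfolding c' apply_rules_def by (auto split: if_splits)
  qed
  show ?case
    apply (rule finite_subset[OF sub])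
    using step.IH finite_shift[OF step.IH, of 1] finite_shift[OF step.IH, of "-1"] by simp
qed

lemma Inv_init:
  assumes fa: "finite {i. a i \<noteq> 0}"
  shows "Inv (opR a) (opL a)"
proof -
  define D where "D = (\<lambda>j. phi True (cfg a) j - phi False (cfg a) j)"
  have A: "D i = 0 \<or> D i = 1" for i unfolding D_def by (rule D0_01)
  have rel: "cfg (opR a) i - cfg (opL a) i = D (i - 1) - D i" for i
    unfolding opR_int opL_int D_def nxt_phi by simp
  have P: "Pxy (cfg (opR a)) (cfg (opL a)) j" for j
  proof -
    have "cfg (opR a) = nxt False (cfg a)" "cfg (opL a) = nxt True (cfg a)"
      by (rule ext, rule opR_int) (rule ext, rule opL_int)
    then show ?thesis using localC[of "cfg a" j] by simp
  qed
  have sub: "{j. D j \<noteq> 0} \<subseteq> {i. a i \<noteq> 0} \<union> {i. i + 1 \<in> {i. a i \<noteq> 0}}"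
  proof
    fix j assume "j \<in> {j. D j \<noteq> 0}"
    then have "f j \<noteq> 0 \<or> f (j + 1) \<noteq> 0" if "f = cfg a" for f
      using D0_supp[of "cfg a" j] unfolding D_def that by (simp add: cfg_def)
    then show "j \<in> {i. a i \<noteq> 0} \<union> {i. i + 1 \<in> {i. a i \<noteq> 0}}" by (auto simp: cfg_def)
  qed
  have fin: "finite {j. D j \<noteq> 0}"
    apply (rule finite_subset[OF sub]) using fa finite_shift[OF fa, of 1] by simp
  show ?thesis unfolding Inv_def using A fin rel P by blast
qed



lemma tri_list:
  fixes D E :: "int \<Rightarrow> int"
  assumes D01: "\<And>i. D i = 0 \<or> D i = 1" and rel: "\<And>i. E i = D (i - 1) - D i"
    and lo: "D (lo - 1) = 0" and m: "lo \<le> m"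
  shows "\<exists>k. map E (filter (\<lambda>i. E i \<noteq> 0) [lo..m]) = concat (replicate k [-1, 1]) @ (if D m = 1 then [-1] else [])"
  using m
proof (induction m rule: int_ge_induct)
  case base
  have "[lo..lo] = [lo]" by simp
  then show ?case using D01[of lo] rel[of lo] lo
    by (auto intro: exI[of _ 0])
next
  case (step m)
  then obtain k where k: "map E (filter (\<lambda>i. E i \<noteq> 0) [lo..m]) = concat (replicate k [-1, 1]) @ (if D m = 1 then [-1] else [])"
    by blast
  have up: "[lo..m+1] = [lo..m] @ [m+1]" using step.hyps upto_rec2[of lo "m+1"] by simp
  have Em: "E (m + 1) = D m - D (m + 1)" using rel[of "m+1"] by simp
  have cc: "concat (replicate (Suc k) [-1, 1::int]) = concat (replicate k [-1, 1]) @ [-1, 1]"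
    by (simp add: replicate_append_same[symmetric])
  show ?case
  proof (cases "D m = 1")
    case True
    show ?thesis
    proof (cases "D (m+1) = 1")
      case True2: True
      then show ?thesis using k up Em \<open>D m = 1\<close> by (intro exI[of _ k]) simp
    next
      case False
      then have "D (m+1) = 0" using D01 by blast
      then show ?thesis using k up Em \<open>D m = 1\<close> cc by (intro exI[of _ "Suc k"]) simp
    qed
  next
    case False
    then have Dm: "D m = 0" using D01 by blast
    show ?thesis
    proof (cases "D (m+1) = 1")
      case True
      then show ?thesis using k up Em Dm by (intro exI[of _ k]) simp
    next
      case False
      then have "D (m+1) = 0" using D01 by blast
      then show ?thesis using k up Em Dm by (intro exI[of _ k]) simp
    qed
  qed
qed

lemma tri_from_D:
  fixes D :: "int \<Rightarrow> int"
  assumes D01: "\<And>i. D i = 0 \<or> D i = 1" and fin: "finite {i. D i \<noteq> 0}"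
    and rel: "\<And>i. Delta a b i = D (i - 1) - D i"
  shows "tri_star a b"
proof (cases "{i. D i \<noteq> 0} = {}")
  case True
  then have "\<And>i. D i = 0" by auto
  then have "{i. Delta a b i \<noteq> 0} = {}" using rel by simp
  then show ?thesis unfolding tri_star_def by (auto intro: exI[of _ 0])
next
  case False
  define S where "S = {i. D i \<noteq> 0}"
  define lo where "lo = Min S"
  define hi where "hi = Max S"
  have fS: "finite S" "S \<noteq> {}" using fin False by (simp_all add: S_def)
  have out: "D i = 0" if "i < lo \<or> i > hi" for i
  proof (rule ccontr)
    assume "D i \<noteq> 0" then have "i \<in> S" by (simp add: S_def)
    then have "lo \<le> i" "i \<le> hi" using fS by (simp_all add: lo_def hi_def)
    then show False using that by simp
  qed
  have lohi: "lo \<le> hi" using fS by (simp add: lo_def hi_def)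
  define E where "E = Delta a b"
  have relE: "\<And>i. E i = D (i - 1) - D i" using rel by (simp add: E_def)
  have supp: "{i. E i \<noteq> 0} = set (filter (\<lambda>i. E i \<noteq> 0) [lo..hi+1])"
  proof -
    have "E i = 0" if "i < lo \<or> i > hi + 1" for i
      using relE[of i] out[of i] out[of "i - 1"] that by auto
    then show ?thesis by force
  qed
  have sl: "sorted_list_of_set {i. E i \<noteq> 0} = filter (\<lambda>i. E i \<noteq> 0) [lo..hi+1]"
  proof -
    have "sorted (filter (\<lambda>i. E i \<noteq> 0) [lo..hi+1])"
      using sorted_wrt_filter[OF sorted_upto] by blast
    then show ?thesis unfolding supp sorted_list_of_set_sort_remdups
      by (simp add: distinct_remdups_id sorted_sort_id)
  qed
  obtain k where k: "map E (filter (\<lambda>i. E i \<noteq> 0) [lo..hi+1]) = concat (replicate k [-1, 1]) @ (if D (hi+1) = 1 then [-1] else [])"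
    using tri_list[where D=D and E=E and lo=lo and m="hi+1", OF D01 relE] out[of "lo - 1"] lohi by auto
  have "D (hi + 1) = 0" using out by simp
  then have "map E (sorted_list_of_set {i. E i \<noteq> 0}) = concat (replicate k [-1, 1])"
    using k sl by simp
  moreover have "finite {i. E i \<noteq> 0}" unfolding supp by (rule finite_set)
  ultimately show ?thesis unfolding tri_star_def E_def by blast
qed

lemma Inv_tri: assumes "Inv x y" shows "tri_star x y"
proof -
  obtain D where D01: "\<And>i. D i = 0 \<or> D i = 1" and fin: "finite {i. D i \<noteq> 0}"
    and xy: "\<And>i. cfg x i - cfg y i = D (i - 1) - D i"
    using assms unfolding Inv_def by blast
  have "\<And>i. Delta x y i = D (i - 1) - D i" using xy by (simp add: Delta_def cfg_def)
  then show ?thesis by (rule tri_from_D[OF D01 fin])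
qed

theorem proposition2:
  fixes n :: nat and a :: config and \<omega> :: "rule list"
  assumes "reachable n a"
  shows "tri_star (word_apply \<omega> (opR a)) (word_apply \<omega> (opL a))"
  using Inv_tri[OF Inv_word[OF Inv_init[OF reach_fin[OF assms]]]] .

end
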